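(* If $L:\mathbb{R}^d\setminus\{0\}\to\mathbb{R}$ is $C^2$ and scale invariant, then for every $x\neq0$, $$\|\nabla L(x)\|_2\le\frac{\pi}{\|x\|_2}\sup_{\|y\|_2=1}\|\nabla^2L(y)\|_2 .$$
   Context: Scale invariant means $L(cx)=L(x)$ for all $c>0$, $x\neq0$. $\|\cdot\|_2$ on matrices is the spectral norm. *)

theory Defs
  imports "HOL-Analysis.Analysis"
begin

definition C2_grad_hess ::
  "(real^'n \<Rightarrow> real) \<Rightarrow> (real^'n \<Rightarrow> real^'n) \<Rightarrow> (real^'n \<Rightarrow> real^'n^'n) \<Rightarrow> bool" where
  "C2_grad_hess L g H \<longleftrightarrow>
     (\<forall>x. x \<noteq> 0 \<longrightarrow> (L has_derivative (\<lambda>h. g x \<bullet> h)) (at x)) \<and>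
     (\<forall>x. x \<noteq> 0 \<longrightarrow> (g has_derivative (\<lambda>h. H x *v h)) (at x)) \<and>
     continuous_on (UNIV - {0}) H"

definition scale_invariant :: "(real^'n \<Rightarrow> real) \<Rightarrow> bool" where
  "scale_invariant L \<longleftrightarrow> (\<forall>c x. c > 0 \<longrightarrow> x \<noteq> 0 \<longrightarrow> L (c *\<^sub>R x) = L x)"

definition spec_norm :: "real^'n^'m \<Rightarrow> real" where
  "spec_norm A = onorm (\<lambda>v. A *v v)"

end

theory Submission
  imports Defs
begin

lemma scale_grad:
  fixes L :: "real^'n \<Rightarrow> real" and g :: "real^'n \<Rightarrow> real^'n" and H :: "real^'n \<Rightarrow> real^'n^'n"
  assumes C: "C2_grad_hess L g H" and S: "scale_invariant L" and z: "z \<noteq> 0" and c: "c > 0"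
  shows "g (c *\<^sub>R z) = (1/c) *\<^sub>R g z"
proof -
  have dL: "\<And>x. x \<noteq> 0 \<Longrightarrow> (L has_derivative (\<lambda>h. g x \<bullet> h)) (at x)"
    using C unfolding C2_grad_hess_def by blast
  have cz: "c *\<^sub>R z \<noteq> 0" using z c by simp
  have d1: "((\<lambda>w. L (c *\<^sub>R w)) has_derivative (\<lambda>h. g (c *\<^sub>R z) \<bullet> (c *\<^sub>R h))) (at z)"
    using has_derivative_compose[OF has_derivative_scaleR_right[OF has_derivative_ident, of c] dL[OF cz]]
    by (simp add: o_def)
  have d2: "((\<lambda>w. L (c *\<^sub>R w)) has_derivative (\<lambda>h. g z \<bullet> h)) (at z)"
  proof (rule has_derivative_transform_within_open[OF dL[OF z], of "UNIV - {0}"])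
    show "\<And>x. x \<in> UNIV - {0} \<Longrightarrow> L x = L (c *\<^sub>R x)"
      using S c unfolding scale_invariant_def by auto
  qed (use z in auto)
  have e: "(\<lambda>h. g (c *\<^sub>R z) \<bullet> (c *\<^sub>R h)) = (\<lambda>h. g z \<bullet> h)"
    using has_derivative_unique[OF d1 d2] .
  define v where "v = c *\<^sub>R g (c *\<^sub>R z) - g z"
  have "v \<bullet> v = 0"
    using fun_cong[OF e, of v] unfolding v_def by (simp add: inner_diff_left algebra_simps)
  then have "v = 0" by simp
  then have "g z = c *\<^sub>R g (c *\<^sub>R z)" unfolding v_def by simp
  then show ?thesis using c by simp
qed

lemma euler:
  fixes L :: "real^'n \<Rightarrow> real" and g :: "real^'n \<Rightarrow> real^'n" and H :: "real^'n \<Rightarrow> real^'n^'n"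
  assumes C: "C2_grad_hess L g H" and S: "scale_invariant L" and z: "z \<noteq> 0"
  shows "g z \<bullet> z = 0"
proof -
  have dL: "(L has_derivative (\<lambda>h. g z \<bullet> h)) (at (1 *\<^sub>R z))"
    using C z unfolding C2_grad_hess_def by simp
  have d1: "((\<lambda>c::real. L (c *\<^sub>R z)) has_derivative (\<lambda>s. g z \<bullet> (s *\<^sub>R z))) (at 1)"
    using has_derivative_compose[OF has_derivative_scaleR_left[OF has_derivative_ident, of z] dL]
    by (simp add: o_def)
  have d2: "((\<lambda>c::real. L (c *\<^sub>R z)) has_derivative (\<lambda>s. 0)) (at 1)"
  proof (rule has_derivative_transform_within_open[OF has_derivative_const[of "L z"], of "{0<..}"])
    show "\<And>x. x \<in> {0<..} \<Longrightarrow> L z = L (x *\<^sub>R z)"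
      using S z unfolding scale_invariant_def by auto
  qed auto
  have "(\<lambda>s. g z \<bullet> (s *\<^sub>R z)) = (\<lambda>s. 0)" using has_derivative_unique[OF d1 d2] .
  from fun_cong[OF this, of 1] show ?thesis by simp
qed

lemma unit_bound:
  fixes L :: "real^'n \<Rightarrow> real" and g :: "real^'n \<Rightarrow> real^'n" and H :: "real^'n \<Rightarrow> real^'n^'n"
  assumes C: "C2_grad_hess L g H" and S: "scale_invariant L" and y: "norm y = 1"
    and M: "\<And>w. norm w = 1 \<Longrightarrow> spec_norm (H w) \<le> M"
  shows "norm (g y) \<le> pi * M"
proof -
  have dL: "\<And>x. x \<noteq> 0 \<Longrightarrow> (L has_derivative (\<lambda>h. g x \<bullet> h)) (at x)"
    using C unfolding C2_grad_hess_def by blast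
  have dg: "\<And>x. x \<noteq> 0 \<Longrightarrow> (g has_derivative (\<lambda>h. H x *v h)) (at x)"
    using C unfolding C2_grad_hess_def by blast
  have M0: "0 \<le> M" using M[OF y] unfolding spec_norm_def
    by (meson matrix_vector_mul_bounded_linear onorm_pos_le order_trans)
  show ?thesis
  proof (cases "g y = 0")
    case True then show ?thesis using M0 by simp
  next
    case False
    define a where "a = norm (g y)"
    have a0: "a > 0" using False a_def by simp
    define u where "u = (1/a) *\<^sub>R g y"
    have y0: "y \<noteq> 0" using y by auto
    have yy: "y \<bullet> y = 1" using y by (simp add: dot_square_norm)
    have uu: "u \<bullet> u = 1" unfolding u_def a_def using a0 a_def
      by (simp add: dot_square_norm power2_eq_square)
    have yu: "y \<bullet> u = 0" unfolding u_def using euler[OF C S y0] by (simp add: inner_commute)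
    have ugy: "g y \<bullet> u = a" unfolding u_def a_def using a0 a_def
      by (simp add: dot_square_norm power2_eq_square)
    define \<gamma> where "\<gamma> t = cos t *\<^sub>R y + sin t *\<^sub>R u" for t
    define \<gamma>' where "\<gamma>' t = (- sin t) *\<^sub>R y + cos t *\<^sub>R u" for t
    have dga: "(\<gamma> has_derivative (\<lambda>s. s *\<^sub>R \<gamma>' t)) (at t)" for t
      unfolding \<gamma>_def \<gamma>'_def
      by (auto intro!: derivative_eq_intros simp: algebra_simps)
    have dga': "(\<gamma>' has_derivative (\<lambda>s. s *\<^sub>R (- \<gamma> t))) (at t)" for t
      unfolding \<gamma>_def \<gamma>'_def
      by (auto intro!: derivative_eq_intros simp: algebra_simps)
    have ng: "\<gamma> t \<bullet> \<gamma> t = 1" for t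
    proof -
      have "\<gamma> t \<bullet> \<gamma> t = (cos t)^2 * (y \<bullet> y) + (sin t)^2 * (u \<bullet> u) + 2 * cos t * sin t * (y \<bullet> u)"
        unfolding \<gamma>_def by (simp add: inner_add_left inner_add_right inner_commute power2_eq_square algebra_simps)
      then show ?thesis using yy uu yu by simp
    qed
    have ng': "\<gamma>' t \<bullet> \<gamma>' t = 1" for t
    proof -
      have "\<gamma>' t \<bullet> \<gamma>' t = (sin t)^2 * (y \<bullet> y) + (cos t)^2 * (u \<bullet> u) - 2 * cos t * sin t * (y \<bullet> u)"
        unfolding \<gamma>'_def by (simp add: inner_add_left inner_add_right inner_commute power2_eq_square algebra_simps)
      then show ?thesis using yy uu yu by simp
    qed
    have gn0: "\<gamma> t \<noteq> 0" for t using ng[of t] by auto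
    have normg: "norm (\<gamma> t) = 1" for t using ng[of t] by (simp add: norm_eq_sqrt_inner)
    have normg': "norm (\<gamma>' t) = 1" for t using ng'[of t] by (simp add: norm_eq_sqrt_inner)
    define f where "f t = L (\<gamma> t)" for t
    define F' where "F' t = g (\<gamma> t) \<bullet> \<gamma>' t" for t
    define F'' where "F'' t = (H (\<gamma> t) *v \<gamma>' t) \<bullet> \<gamma>' t - g (\<gamma> t) \<bullet> \<gamma> t" for t
    have df: "DERIV f t :> F' t" for t
    proof -
      have "(f has_derivative (\<lambda>s. g (\<gamma> t) \<bullet> (s *\<^sub>R \<gamma>' t))) (at t)"
        using has_derivative_compose[OF dga dL[OF gn0]] unfolding f_def o_def by simp
      moreover have "(\<lambda>s. g (\<gamma> t) \<bullet> (s *\<^sub>R \<gamma>' t)) = (*) (F' t)"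
        by (auto simp: F'_def)
      ultimately show ?thesis by (simp add: has_field_derivative_def)
    qed
    have dF: "DERIV F' t :> F'' t" for t
    proof -
      have d1: "((\<lambda>s. g (\<gamma> s)) has_derivative (\<lambda>s. H (\<gamma> t) *v (s *\<^sub>R \<gamma>' t))) (at t)"
        using has_derivative_compose[OF dga dg[OF gn0]] unfolding o_def by simp
      have "(F' has_derivative (\<lambda>h. g (\<gamma> t) \<bullet> (h *\<^sub>R (- \<gamma> t)) + (H (\<gamma> t) *v (h *\<^sub>R \<gamma>' t)) \<bullet> \<gamma>' t)) (at t)"
        unfolding F'_def by (rule has_derivative_inner[OF d1 dga'])
      moreover have "(\<lambda>h. g (\<gamma> t) \<bullet> (h *\<^sub>R (- \<gamma> t)) + (H (\<gamma> t) *v (h *\<^sub>R \<gamma>' t)) \<bullet> \<gamma>' t) = (*) (F'' t)"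
        by (auto simp: F''_def matrix_vector_mult_scaleR algebra_simps)
      ultimately show ?thesis by (simp add: has_field_derivative_def)
    qed
    have F''b: "F'' t \<le> M" for t
    proof -
      have e: "g (\<gamma> t) \<bullet> \<gamma> t = 0" using euler[OF C S gn0] .
      have "(H (\<gamma> t) *v \<gamma>' t) \<bullet> \<gamma>' t \<le> norm (H (\<gamma> t) *v \<gamma>' t) * norm (\<gamma>' t)"
        by (rule norm_cauchy_schwarz)
      also have "\<dots> \<le> spec_norm (H (\<gamma> t)) * norm (\<gamma>' t) * norm (\<gamma>' t)"
        unfolding spec_norm_def
        by (intro mult_right_mono onorm[OF matrix_vector_mul_bounded_linear]) simp
      also have "\<dots> \<le> M" using M[OF normg] normg' by simp
      finally show ?thesis unfolding F''_def e by simp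
    qed
    have F'b: "- F'' t \<le> M" for t
    proof -
      have e: "g (\<gamma> t) \<bullet> \<gamma> t = 0" using euler[OF C S gn0] .
      have "- ((H (\<gamma> t) *v \<gamma>' t) \<bullet> \<gamma>' t) \<le> norm (H (\<gamma> t) *v \<gamma>' t) * norm (\<gamma>' t)"
        using Cauchy_Schwarz_ineq2[of "H (\<gamma> t) *v \<gamma>' t" "\<gamma>' t"] by linarith
      also have "\<dots> \<le> spec_norm (H (\<gamma> t)) * norm (\<gamma>' t) * norm (\<gamma>' t)"
        unfolding spec_norm_def
        by (intro mult_right_mono onorm[OF matrix_vector_mul_bounded_linear]) simp
      also have "\<dots> \<le> M" using M[OF normg] normg' by simp
      finally show ?thesis unfolding F''_def e by simp
    qed
    have g0: "\<gamma> 0 = y" "\<gamma>' 0 = u" by (simp_all add: \<gamma>_def \<gamma>'_def)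
    have g2: "\<gamma> (2*pi) = y" "\<gamma>' (2*pi) = u" by (simp_all add: \<gamma>_def \<gamma>'_def)
    have F0: "F' 0 = a" "F' (2*pi) = a" using ugy g0 g2 by (simp_all add: F'_def)
    obtain z where z: "0 < z" "z < 2*pi" "DERIV f z :> 0"
    proof -
      have "\<exists>z. 0 < z \<and> z < 2*pi \<and> DERIV f z :> 0"
      proof (rule Rolle)
        show "f 0 = f (2*pi)" using g0 g2 by (simp add: f_def)
        show "continuous_on {0..2*pi} f"
          by (meson DERIV_continuous continuous_at_imp_continuous_on df)
        show "\<And>x. 0 < x \<Longrightarrow> x < 2*pi \<Longrightarrow> f differentiable (at x)"
          using df real_differentiable_def by blast
      qed simp
      then show ?thesis using that by blast
    qed
    have Fz: "F' z = 0" using DERIV_unique[OF df z(3)] .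
    show ?thesis
    proof (cases "z \<le> pi")
      case True
      obtain w where "0 < w" "w < z" "F' z - F' 0 = (z - 0) * F'' w"
        using MVT2[OF z(1), of F' F''] dF by blast
      then have "a = z * (- F'' w)" using Fz F0 by simp
      also have "\<dots> \<le> z * M" using z(1) F'b[of w] by (intro mult_left_mono) auto
      also have "\<dots> \<le> pi * M" using True M0 by (intro mult_right_mono) auto
      finally show ?thesis using a_def by simp
    next
      case False
      obtain w where "z < w" "w < 2*pi" "F' (2*pi) - F' z = (2*pi - z) * F'' w"
        using MVT2[OF z(2), of F' F''] dF by blast
      then have "a = (2*pi - z) * F'' w" using Fz F0 by simp
      also have "\<dots> \<le> (2*pi - z) * M" using z(2) F''b[of w] by (intro mult_left_mono) auto
      also have "\<dots> \<le> pi * M" using False M0 by (intro mult_right_mono) auto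
      finally show ?thesis using a_def by simp
    qed
  qed
qed

theorem mainTheorem6:
  fixes L :: "real^'n \<Rightarrow> real" and g :: "real^'n \<Rightarrow> real^'n" and H :: "real^'n \<Rightarrow> real^'n^'n"
    and x :: "real^'n"
  assumes "C2_grad_hess L g H"
    and "scale_invariant L"
    and "x \<noteq> 0"
  shows "norm (g x) \<le> pi / norm x * (SUP y\<in>sphere 0 1. spec_norm (H y))"
proof -
  note C = assms(1) and S = assms(2)
  have cH: "continuous_on (sphere 0 1) H"
    using C unfolding C2_grad_hess_def by (rule continuous_on_subset[OF conjunct2[OF conjunct2]]) auto
  have "compact (H ` sphere 0 1)" by (rule compact_continuous_image[OF cH compact_sphere])
  then obtain B where B: "\<And>w. w \<in> sphere 0 1 \<Longrightarrow> norm (H w) \<le> B"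
    using compact_imp_bounded bounded_iff by (metis image_eqI)
  have sb: "spec_norm (H w) \<le> real CARD('n) * real CARD('n) * B" if "w \<in> sphere 0 1" for w
    unfolding spec_norm_def
  proof (rule onorm_le_matrix_component)
    fix i j
    have "\<bar>H w $ i $ j\<bar> \<le> norm (H w $ i)" by (rule component_le_norm_cart)
    also have "\<dots> \<le> norm (H w)" by (rule Finite_Cartesian_Product.norm_nth_le)
    finally show "\<bar>H w $ i $ j\<bar> \<le> B" using B[OF that] by linarith
  qed
  have bdd: "bdd_above ((\<lambda>y. spec_norm (H y)) ` sphere 0 1)"
    using sb by (intro bdd_aboveI2) auto
  define M where "M = (SUP y\<in>sphere 0 1. spec_norm (H y))"
  have Mb: "\<And>w. norm w = 1 \<Longrightarrow> spec_norm (H w) \<le> M"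
    unfolding M_def by (rule cSUP_upper[OF _ bdd]) simp
  define r where "r = norm x"
  have r0: "r > 0" using assms(3) r_def by simp
  define y where "y = (1/r) *\<^sub>R x"
  have ny: "norm y = 1" using r0 unfolding y_def r_def by simp
  have y0: "y \<noteq> 0" using ny by auto
  have xy: "x = r *\<^sub>R y" using r0 unfolding y_def by simp
  have "g x = (1/r) *\<^sub>R g y" unfolding xy by (rule scale_grad[OF C S y0 r0])
  then have "norm (g x) = norm (g y) / r" using r0 by simp
  also have "\<dots> \<le> pi * M / r" using unit_bound[OF C S ny Mb] r0 by (simp add: divide_right_mono)
  finally show ?thesis unfolding M_def r_def by simp
qed

end
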